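(* Let $Q$ be a connected quiver and $\Lambda=kQ/\langle Z\rangle$ a finite dimensional monomial algebra. (i) The center of the Lie algebra $L_0$ is spanned by the elements $\sum_{a\in C}(a,a)$, where $C$ runs over the connected components of the classes of parallel arrows of $Q$. (ii) If $k$ has characteristic $0$ or $Q$ has no oriented cycle, then the center of $\operatorname{H}^1(\Lambda,\Lambda)$ is contained in the center of $L_0$.
   Context: $k$ is an algebraically closed field, $Q$ a finite quiver; $Q_n$ = paths of length $n$ ($Q_0$ vertices, $Q_1$ arrows), $s,t$ = source, terminus. $Z$ is a minimal set of paths of length $\ge2$ (no proper subpath of an element of $Z$ lies in $Z$), $\Lambda=kQ/\langle Z\rangle$ finite dimensional; $B$ = paths (vertices included) containing no element of $Z$ as subpath, $B_n=B\cap Q_n$. Paths are parallel if they have the same source and terminus; $X//Y$ = pairs of parallel paths in $X\times Y$; $k(X//Y)$ the vector space with that basis. For a path $\varepsilon$ and $(a,\gamma)\in Q_1//B$, $\varepsilon^{(a,\gamma)}$ = sum of all paths in $B$ obtained by replacing one occurrence of $a$ in $\varepsilon$ by $\gamma$ ($0$ if none); $(\eta,\varepsilon^{(a,\gamma)})=\sum_i(\eta,\varepsilon_i)$ if $\varepsilon^{(a,\gamma)}=\sum_i\varepsilon_i$. $\psi_0:k(Q_0//B)\to k(Q_1//B)$, $(e,\gamma)\mapsto\sum_{a\in Q_1,\,s(a)=e,\,a\gamma\in B}(a,a\gamma)-\sum_{a\in Q_1,\,t(a)=e,\,\gamma a\in B}(a,\gamma a)$; $\psi_1:k(Q_1//B)\to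 k(Z//B)$, $(a,\gamma)\mapsto\sum_{p\in Z}(p,p^{(a,\gamma)})$. With the bracket $[(a,\gamma),(b,\varepsilon)]=(b,\varepsilon^{(a,\gamma)})-(a,\gamma^{(b,\varepsilon)})$, $\operatorname{H}^1(\Lambda,\Lambda)\cong\operatorname{Ker}\psi_1/\operatorname{Im}\psi_0$ as Lie algebras. $L_0$ is the Lie subalgebra formed by the classes of elements of $k(Q_1//Q_1)\cap\operatorname{Ker}\psi_1$; for $(a,b)\in Q_1//Q_1\cap\operatorname{Ker}\psi_1$, $(a,b)$ also denotes its class. For parallel arrows: $a\le_{\langle Z\rangle}b$ iff $p^{(b,a)}=0$ for all $p\in Z$. Classes of parallel arrows are the equivalence classes of parallelism on $Q_1$. A subset $C$ of a class $\bar\alpha$ is connected if any two arrows of $C$ can be joined by a sequence of arrows of $C$ in which any two consecutive ones $\alpha_i,\alpha_{i+1}$ satisfy $\alpha_i\le_{\langle Z\rangle}\alpha_{i+1}$ or $\alpha_{i+1}\le_{\langle Z\rangle}\alpha_i$; connected components are the maximal connected subsets (they partition $\bar\alpha$). *)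

theory Defs
  imports "HOL-Computational_Algebra.Polynomial" "HOL-Library.Sublist"
begin

record ('v, 'a) quiver =
  verts :: "'v set"
  arrs  :: "'a set"
  src   :: "'a \<Rightarrow> 'v"
  tgt   :: "'a \<Rightarrow> 'v"

text \<open>A path is a pair (v, as): as = [a_n, ..., a_1] is the list of arrows written
  in composition order (a_1 is traversed first), v is the source vertex.
  The trivial path at the vertex v is (v, []).\<close>
type_synonym ('v, 'a) path = "'v \<times> 'a list"

definition finite_quiver :: "('v, 'a) quiver \<Rightarrow> bool" where
  "finite_quiver Q \<longleftrightarrow> finite (verts Q) \<and> finite (arrs Q) \<and>
     (\<forall>a\<in>arrs Q. src Q a \<in> verts Q \<and> tgt Q a \<in> verts Q)"

definition is_path :: "('v, 'a) quiver \<Rightarrow> ('v, 'a) path \<Rightarrow> bool" where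
  "is_path Q p \<longleftrightarrow> fst p \<in> verts Q \<and> set (snd p) \<subseteq> arrs Q \<and>
     (snd p \<noteq> [] \<longrightarrow> fst p = src Q (last (snd p))) \<and>
     (\<forall>i. Suc i < length (snd p) \<longrightarrow> src Q (snd p ! i) = tgt Q (snd p ! Suc i))"

definition psrc :: "('v, 'a) path \<Rightarrow> 'v" where
  "psrc p = fst p"

definition ptgt :: "('v, 'a) quiver \<Rightarrow> ('v, 'a) path \<Rightarrow> 'v" where
  "ptgt Q p = (if snd p = [] then fst p else tgt Q (hd (snd p)))"

definition vpath :: "'v \<Rightarrow> ('v, 'a) path" where
  "vpath v = (v, [])"

definition apath :: "('v, 'a) quiver \<Rightarrow> 'a \<Rightarrow> ('v, 'a) path" where
  "apath Q a = (src Q a, [a])"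

definition Q0 :: "('v, 'a) quiver \<Rightarrow> ('v, 'a) path set" where
  "Q0 Q = vpath ` verts Q"

definition Q1 :: "('v, 'a) quiver \<Rightarrow> ('v, 'a) path set" where
  "Q1 Q = apath Q ` arrs Q"

definition parallel :: "('v, 'a) quiver \<Rightarrow> ('v, 'a) path \<Rightarrow> ('v, 'a) path \<Rightarrow> bool" where
  "parallel Q p q \<longleftrightarrow> psrc p = psrc q \<and> ptgt Q p = ptgt Q q"

definition par :: "('v, 'a) quiver \<Rightarrow> ('v, 'a) path set \<Rightarrow> ('v, 'a) path set
    \<Rightarrow> (('v, 'a) path \<times> ('v, 'a) path) set" where
  "par Q X Y = {(p, q). p \<in> X \<and> q \<in> Y \<and> parallel Q p q}"

definition connected_quiver :: "('v, 'a) quiver \<Rightarrow> bool" where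
  "connected_quiver Q \<longleftrightarrow> verts Q \<noteq> {} \<and>
     (\<forall>u\<in>verts Q. \<forall>v\<in>verts Q.
        (u, v) \<in> ({(src Q a, tgt Q a) | a. a \<in> arrs Q} \<union> {(tgt Q a, src Q a) | a. a \<in> arrs Q})\<^sup>*)"

definition has_oriented_cycle :: "('v, 'a) quiver \<Rightarrow> bool" where
  "has_oriented_cycle Q \<longleftrightarrow> (\<exists>p. is_path Q p \<and> snd p \<noteq> [] \<and> psrc p = ptgt Q p)"

definition admissible_Z :: "('v, 'a) quiver \<Rightarrow> ('v, 'a) path set \<Rightarrow> bool" where
  "admissible_Z Q Z \<longleftrightarrow> (\<forall>z\<in>Z. is_path Q z \<and> length (snd z) \<ge> 2) \<and>
     (\<forall>z\<in>Z. \<forall>z'\<in>Z. sublist (snd z') (snd z) \<longrightarrow> z' = z)"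

definition Bset :: "('v, 'a) quiver \<Rightarrow> ('v, 'a) path set \<Rightarrow> ('v, 'a) path set" where
  "Bset Q Z = {p. is_path Q p \<and> \<not> (\<exists>z\<in>Z. sublist (snd z) (snd p))}"

text \<open>Multiplicity of the path q in eps^(a,gamma): number of occurrences of the
  arrow a in eps whose replacement by gamma yields q, with q in B.\<close>
definition repl_count :: "('v, 'a) quiver \<Rightarrow> ('v, 'a) path set \<Rightarrow> ('v, 'a) path
    \<Rightarrow> 'a \<Rightarrow> ('v, 'a) path \<Rightarrow> ('v, 'a) path \<Rightarrow> nat" where
  "repl_count Q Z eps a gam q = card {i. i < length (snd eps) \<and> snd eps ! i = a \<and>
     q = (fst eps, take i (snd eps) @ snd gam @ drop (Suc i) (snd eps)) \<and> q \<in> Bset Q Z}"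

definition kspace :: "('v, 'a) quiver \<Rightarrow> ('v, 'a) path set \<Rightarrow> ('v, 'a) path set
    \<Rightarrow> (('v, 'a) path \<times> ('v, 'a) path \<Rightarrow> 'k::field) set" where
  "kspace Q X Y = {f. \<forall>u. u \<notin> par Q X Y \<longrightarrow> f u = 0}"

definition delta :: "'b \<Rightarrow> 'b \<Rightarrow> 'k::field" where
  "delta u w = (if w = u then 1 else 0)"

text \<open>psi_0 on a basis element (e, gamma): paths compose right to left, a gamma
  means gamma followed by a.\<close>
definition psi0b :: "('v, 'a) quiver \<Rightarrow> ('v, 'a) path set \<Rightarrow> ('v, 'a) path \<Rightarrow> ('v, 'a) path
    \<Rightarrow> ('v, 'a) path \<times> ('v, 'a) path \<Rightarrow> 'k::field" where
  "psi0b Q Z e gam w =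
     (\<Sum>a\<in>{a\<in>arrs Q. src Q a = fst e \<and> (fst gam, a # snd gam) \<in> Bset Q Z}.
         delta (apath Q a, (fst gam, a # snd gam)) w)
   - (\<Sum>a\<in>{a\<in>arrs Q. tgt Q a = fst e \<and> (src Q a, snd gam @ [a]) \<in> Bset Q Z}.
         delta (apath Q a, (src Q a, snd gam @ [a])) w)"

definition psi0 :: "('v, 'a) quiver \<Rightarrow> ('v, 'a) path set
    \<Rightarrow> (('v, 'a) path \<times> ('v, 'a) path \<Rightarrow> 'k::field)
    \<Rightarrow> (('v, 'a) path \<times> ('v, 'a) path \<Rightarrow> 'k)" where
  "psi0 Q Z f = (\<lambda>w. \<Sum>u\<in>par Q (Q0 Q) (Bset Q Z). f u * psi0b Q Z (fst u) (snd u) w)"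

definition psi1b :: "('v, 'a) quiver \<Rightarrow> ('v, 'a) path set \<Rightarrow> ('v, 'a) path \<Rightarrow> ('v, 'a) path
    \<Rightarrow> ('v, 'a) path \<times> ('v, 'a) path \<Rightarrow> 'k::field" where
  "psi1b Q Z a gam w =
     (if fst w \<in> Z then of_nat (repl_count Q Z (fst w) (hd (snd a)) gam (snd w)) else 0)"

definition psi1 :: "('v, 'a) quiver \<Rightarrow> ('v, 'a) path set
    \<Rightarrow> (('v, 'a) path \<times> ('v, 'a) path \<Rightarrow> 'k::field)
    \<Rightarrow> (('v, 'a) path \<times> ('v, 'a) path \<Rightarrow> 'k)" where
  "psi1 Q Z f = (\<lambda>w. \<Sum>u\<in>par Q (Q1 Q) (Bset Q Z). f u * psi1b Q Z (fst u) (snd u) w)"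

definition bracketb :: "('v, 'a) quiver \<Rightarrow> ('v, 'a) path set
    \<Rightarrow> ('v, 'a) path \<times> ('v, 'a) path \<Rightarrow> ('v, 'a) path \<times> ('v, 'a) path
    \<Rightarrow> ('v, 'a) path \<times> ('v, 'a) path \<Rightarrow> 'k::field" where
  "bracketb Q Z u v w =
     (if fst w = fst v then of_nat (repl_count Q Z (snd v) (hd (snd (fst u))) (snd u) (snd w)) else 0)
   - (if fst w = fst u then of_nat (repl_count Q Z (snd u) (hd (snd (fst v))) (snd v) (snd w)) else 0)"

definition bracket :: "('v, 'a) quiver \<Rightarrow> ('v, 'a) path set
    \<Rightarrow> (('v, 'a) path \<times> ('v, 'a) path \<Rightarrow> 'k::field)
    \<Rightarrow> (('v, 'a) path \<times> ('v, 'a) path \<Rightarrow> 'k)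
    \<Rightarrow> (('v, 'a) path \<times> ('v, 'a) path \<Rightarrow> 'k)" where
  "bracket Q Z x y = (\<lambda>w. \<Sum>u\<in>par Q (Q1 Q) (Bset Q Z). \<Sum>v\<in>par Q (Q1 Q) (Bset Q Z).
       x u * y v * bracketb Q Z u v w)"

definition KerPsi1 :: "('v, 'a) quiver \<Rightarrow> ('v, 'a) path set
    \<Rightarrow> (('v, 'a) path \<times> ('v, 'a) path \<Rightarrow> 'k::field) set" where
  "KerPsi1 Q Z = {f \<in> kspace Q (Q1 Q) (Bset Q Z). psi1 Q Z f = (\<lambda>_. 0)}"

definition ImPsi0 :: "('v, 'a) quiver \<Rightarrow> ('v, 'a) path set
    \<Rightarrow> (('v, 'a) path \<times> ('v, 'a) path \<Rightarrow> 'k::field) set" where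
  "ImPsi0 Q Z = psi0 Q Z ` kspace Q (Q0 Q) (Bset Q Z)"

definition L0rep :: "('v, 'a) quiver \<Rightarrow> ('v, 'a) path set
    \<Rightarrow> (('v, 'a) path \<times> ('v, 'a) path \<Rightarrow> 'k::field) set" where
  "L0rep Q Z = kspace Q (Q1 Q) (Q1 Q) \<inter> KerPsi1 Q Z"

text \<open>The class of x lies in the center of H^1 = Ker psi_1 / Im psi_0.\<close>
definition central_H1 :: "('v, 'a) quiver \<Rightarrow> ('v, 'a) path set
    \<Rightarrow> (('v, 'a) path \<times> ('v, 'a) path \<Rightarrow> 'k::field) \<Rightarrow> bool" where
  "central_H1 Q Z x \<longleftrightarrow> x \<in> KerPsi1 Q Z \<and>
     (\<forall>y\<in>KerPsi1 Q Z. bracket Q Z x y \<in> ImPsi0 Q Z)"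

definition central_L0 :: "('v, 'a) quiver \<Rightarrow> ('v, 'a) path set
    \<Rightarrow> (('v, 'a) path \<times> ('v, 'a) path \<Rightarrow> 'k::field) \<Rightarrow> bool" where
  "central_L0 Q Z x \<longleftrightarrow> x \<in> L0rep Q Z \<and>
     (\<forall>y\<in>L0rep Q Z. bracket Q Z x y \<in> ImPsi0 Q Z)"

definition arrow_le :: "('v, 'a) quiver \<Rightarrow> ('v, 'a) path set \<Rightarrow> 'a \<Rightarrow> 'a \<Rightarrow> bool" where
  "arrow_le Q Z a b \<longleftrightarrow> a \<in> arrs Q \<and> b \<in> arrs Q \<and> parallel Q (apath Q a) (apath Q b) \<and>
     (\<forall>p\<in>Z. \<forall>q. repl_count Q Z p b (apath Q a) q = 0)"

definition arrow_class :: "('v, 'a) quiver \<Rightarrow> 'a \<Rightarrow> 'a set" where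
  "arrow_class Q a = {b \<in> arrs Q. parallel Q (apath Q a) (apath Q b)}"

definition connected_arrows :: "('v, 'a) quiver \<Rightarrow> ('v, 'a) path set \<Rightarrow> 'a set \<Rightarrow> bool" where
  "connected_arrows Q Z C \<longleftrightarrow> (\<forall>a\<in>C. \<forall>b\<in>C.
     (a, b) \<in> {(x, y). x \<in> C \<and> y \<in> C \<and> (arrow_le Q Z x y \<or> arrow_le Q Z y x)}\<^sup>*)"

definition arrow_components :: "('v, 'a) quiver \<Rightarrow> ('v, 'a) path set \<Rightarrow> 'a set set" where
  "arrow_components Q Z = {C. \<exists>a\<in>arrs Q. C \<subseteq> arrow_class Q a \<and> C \<noteq> {} \<and>
     connected_arrows Q Z C \<and>
     (\<forall>D. C \<subseteq> D \<and> D \<subseteq> arrow_class Q a \<and> connected_arrows Q Z D \<longrightarrow> D = C)}"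

definition comp_sum :: "('v, 'a) quiver \<Rightarrow> 'a set
    \<Rightarrow> (('v, 'a) path \<times> ('v, 'a) path \<Rightarrow> 'k::field)" where
  "comp_sum Q C = (\<lambda>w. \<Sum>a\<in>C. delta (apath Q a, apath Q a) w)"

end

theory Submission
  imports Defs
begin


lemma card_idx_count: "card {i. i < length xs \<and> xs ! i = a} = count_list xs a"
proof (induction xs)
  case Nil then show ?case by simp
next
  case (Cons x xs)
  have eq: "{i. i < length (x#xs) \<and> (x#xs) ! i = a} =
        (if x = a then {0} else {}) \<union> Suc ` {i. i < length xs \<and> xs ! i = a}"
  proof (rule set_eqI)
    fix i show "i \<in> {i. i < length (x#xs) \<and> (x#xs) ! i = a} \<longleftrightarrow>
        i \<in> (if x = a then {0} else {}) \<union> Suc ` {i. i < length xs \<and> xs ! i = a}"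
      by (cases i) auto
  qed
  have "card ((if x = a then {0} else {}) \<union> Suc ` {i. i < length xs \<and> xs ! i = a}) =
        (if x = a then 1 else 0) + card (Suc ` {i. i < length xs \<and> xs ! i = a})"
    by (auto simp: card_insert_if)
  also have "card (Suc ` {i. i < length xs \<and> xs ! i = a}) = card {i. i < length xs \<and> xs ! i = a}"
    by (simp add: card_image)
  finally show ?case using Cons eq by simp
qed

locale qset =
  fixes Q :: "('v, 'a) quiver" and Z :: "('v, 'a) path set"
  assumes fq: "finite_quiver Q" and adm: "admissible_Z Q Z" and finB: "finite (Bset Q Z)"
begin

abbreviation "B \<equiv> Bset Q Z"

lemma apath_inj[simp]: "apath Q a = apath Q b \<longleftrightarrow> a = b"
  by (auto simp: apath_def)

lemma fst_apath[simp]: "fst (apath Q a) = src Q a" and snd_apath[simp]: "snd (apath Q a) = [a]"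
  by (simp_all add: apath_def)

lemma apath_B: "a \<in> arrs Q \<Longrightarrow> apath Q a \<in> B"
proof -
  assume a: "a \<in> arrs Q"
  have "is_path Q (apath Q a)" using a fq by (auto simp: is_path_def apath_def finite_quiver_def)
  moreover have "\<not> sublist (snd z) [a]" if "z \<in> Z" for z
  proof
    assume "sublist (snd z) [a]"
    then have "length (snd z) \<le> 1" using sublist_length_le by fastforce
    with that adm show False by (auto simp: admissible_Z_def)
  qed
  ultimately show ?thesis by (auto simp: Bset_def)
qed

lemma Z_notB: "p \<in> Z \<Longrightarrow> p \<notin> B"
  by (auto simp: Bset_def)

lemma finQ1: "finite (Q1 Q)" using fq by (simp add: Q1_def finite_quiver_def)

lemma par_sub: "par Q X Y \<subseteq> X \<times> Y" by (auto simp: par_def)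

lemma fin_par: "finite X \<Longrightarrow> finite Y \<Longrightarrow> finite (par Q X Y)"
  by (rule finite_subset[OF par_sub]) simp

lemma fin_par1B: "finite (par Q (Q1 Q) B)" using fin_par finQ1 finB by blast

lemma ptgt_apath[simp]: "ptgt Q (apath Q a) = tgt Q a" by (simp add: ptgt_def apath_def)
lemma psrc_apath[simp]: "psrc (apath Q a) = src Q a" by (simp add: psrc_def apath_def)

lemma par_apath: "parallel Q (apath Q a) (apath Q b) \<longleftrightarrow> src Q a = src Q b \<and> tgt Q a = tgt Q b"
  by (simp add: parallel_def)

lemma rc_single: "repl_count Q Z (apath Q e) a gam q =
   (if e = a \<and> q = (src Q e, snd gam) \<and> q \<in> B then 1 else 0)"
proof -
  have "{i. i < length (snd (apath Q e)) \<and> snd (apath Q e) ! i = a \<and>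
     q = (fst (apath Q e), take i (snd (apath Q e)) @ snd gam @ drop (Suc i) (snd (apath Q e))) \<and> q \<in> B}
    = (if e = a \<and> q = (src Q e, snd gam) \<and> q \<in> B then {0} else {})" by (cases "e = a") (auto simp: apath_def)
  then have "card {i. i < length (snd (apath Q e)) \<and> snd (apath Q e) ! i = a \<and>
     q = (fst (apath Q e), take i (snd (apath Q e)) @ snd gam @ drop (Suc i) (snd (apath Q e))) \<and> q \<in> B}
    = card (if e = a \<and> q = (src Q e, snd gam) \<and> q \<in> B then {0::nat} else {})" by (rule arg_cong)
  also have "\<dots> = (if e = a \<and> q = (src Q e, snd gam) \<and> q \<in> B then 1 else 0)"
    by (cases "e = a \<and> q = (src Q e, snd gam) \<and> q \<in> B") auto
  finally show ?thesis unfolding repl_count_def .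
qed

lemma rc_self: "repl_count Q Z eps a (apath Q a) q =
   (if q = eps \<and> eps \<in> B then count_list (snd eps) a else 0)"
proof -
  have "{i. i < length (snd eps) \<and> snd eps ! i = a \<and>
     q = (fst eps, take i (snd eps) @ snd (apath Q a) @ drop (Suc i) (snd eps)) \<and> q \<in> B}
    = (if q = eps \<and> eps \<in> B then {i. i < length (snd eps) \<and> snd eps ! i = a} else {})"
    by (auto simp: apath_def) (metis append_Cons append_Nil id_take_nth_drop prod.collapse)+
  then show ?thesis by (simp add: repl_count_def card_idx_count)
qed

end



context qset begin

definition pt :: "('v, 'a) path \<times> ('v, 'a) path \<Rightarrow> ('v, 'a) path \<times> ('v, 'a) path \<Rightarrow> 'k::field" where
  "pt v = (\<lambda>w. if w = v then 1 else 0)"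

lemma sum_pt: "(\<Sum>u\<in>S. pt v u * f u) = (if finite S \<and> v \<in> S then f v else 0)"
proof (cases "finite S")
  case True
  have "(\<Sum>u\<in>S. pt v u * f u) = (\<Sum>u\<in>S. if u = v then f u else 0)"
    by (rule sum.cong) (auto simp: pt_def)
  also have "\<dots> = (if v \<in> S then f v else 0)" using True by (simp add: sum.delta')
  finally show ?thesis using True by simp
qed simp

lemma rc_nz: "repl_count Q Z eps a gam q \<noteq> 0 \<Longrightarrow>
   \<exists>i<length (snd eps). snd eps ! i = a \<and>
     q = (fst eps, take i (snd eps) @ snd gam @ drop (Suc i) (snd eps)) \<and> q \<in> B"
proof -
  assume "repl_count Q Z eps a gam q \<noteq> 0"
  then have "{i. i < length (snd eps) \<and> snd eps ! i = a \<and>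
     q = (fst eps, take i (snd eps) @ snd gam @ drop (Suc i) (snd eps)) \<and> q \<in> B} \<noteq> {}"
    unfolding repl_count_def by (metis card.empty)
  then show ?thesis by blast
qed

lemma hd_apath[simp]: "hd (snd (apath Q a)) = a" by simp

lemma mem_parQ1: "u \<in> par Q (Q1 Q) Y \<longleftrightarrow>
   (\<exists>a\<in>arrs Q. fst u = apath Q a \<and> snd u \<in> Y \<and> fst (snd u) = src Q a \<and> ptgt Q (snd u) = tgt Q a)"
  by (cases u) (auto simp: par_def Q1_def parallel_def psrc_def)

lemma psi1_diag:
  assumes "\<And>u. x u \<noteq> 0 \<Longrightarrow> \<exists>a\<in>arrs Q. u = (apath Q a, apath Q a)"
  shows "psi1 Q Z x = (\<lambda>_. 0)"
proof
  fix w
  have "x u * psi1b Q Z (fst u) (snd u) w = 0" for u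
  proof (cases "x u = 0")
    case False
    then obtain a where "u = (apath Q a, apath Q a)" using assms by blast
    then show ?thesis by (auto simp: psi1b_def rc_self dest: Z_notB)
  qed simp
  then show "psi1 Q Z x w = 0" unfolding psi1_def by (intro sum.neutral ballI) simp
qed

lemma kspace_out: "f \<in> kspace Q X Y \<Longrightarrow> u \<notin> par Q X Y \<Longrightarrow> f u = 0"
  unfolding kspace_def by blast

lemma pt_kspace1: "v \<in> par Q X Y \<Longrightarrow> pt v \<in> kspace Q X Y"
  by (auto simp: kspace_def pt_def)

lemma psi1_pt:
  "psi1 Q Z (pt v) w = (if v \<in> par Q (Q1 Q) B then psi1b Q Z (fst v) (snd v) w else 0)"
  unfolding psi1_def using sum_pt[of v "\<lambda>u. psi1b Q Z (fst u) (snd u) w" "par Q (Q1 Q) B"] fin_par1B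
  by simp

lemma psi1_pt_le:
  assumes "arrow_le Q Z e b"
  shows "psi1 Q Z (pt (apath Q b, apath Q e)) = (\<lambda>_. 0)"
proof
  fix w
  show "psi1 Q Z (pt (apath Q b, apath Q e)) w = 0"
    using assms unfolding psi1_pt by (cases w) (simp add: psi1b_def arrow_le_def)
qed

lemma ImDiag:
  fixes g :: "_ \<Rightarrow> 'k::field"
  assumes "g \<in> ImPsi0 Q Z" "b \<noteq> e"
  shows "g (apath Q b, apath Q e) = 0"
proof -
  obtain f where g: "g = psi0 Q Z f" using assms by (auto simp: ImPsi0_def)
  have "psi0b Q Z ee gam (apath Q b, apath Q e) = (0::'k)" for ee gam
  proof -
    have 1: "delta (apath Q a, (fst gam, a # snd gam)) (apath Q b, apath Q e) = (0::'k)" for a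
      using assms(2) by (auto simp: delta_def apath_def)
    have 2: "delta (apath Q a, (src Q a, snd gam @ [a])) (apath Q b, apath Q e) = (0::'k)" for a
      using assms(2) by (auto simp: delta_def apath_def)
    show ?thesis unfolding psi0b_def 1 2 by simp
  qed
  then show ?thesis by (simp add: g psi0_def)
qed

lemma bracket_pt:
  "bracket Q Z x (pt v) w =
     (if v \<in> par Q (Q1 Q) B then \<Sum>u\<in>par Q (Q1 Q) B. x u * bracketb Q Z u v w else 0)"
proof -
  have "bracket Q Z x (pt v) w = (\<Sum>u\<in>par Q (Q1 Q) B. if v \<in> par Q (Q1 Q) B then x u * bracketb Q Z u v w else 0)"
    unfolding bracket_def
  proof (rule sum.cong[OF refl])
    fix u
    have "(\<Sum>v'\<in>par Q (Q1 Q) B. x u * pt v v' * bracketb Q Z u v' w) =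
        (\<Sum>v'\<in>par Q (Q1 Q) B. pt v v' * (x u * bracketb Q Z u v' w))"
      by (rule sum.cong) (auto simp: algebra_simps)
    also have "\<dots> = (if v \<in> par Q (Q1 Q) B then x u * bracketb Q Z u v w else 0)"
      using sum_pt[of v "\<lambda>v'. x u * bracketb Q Z u v' w" "par Q (Q1 Q) B"] fin_par1B by simp
    finally show "(\<Sum>v'\<in>par Q (Q1 Q) B. x u * pt v v' * bracketb Q Z u v' w) =
        (if v \<in> par Q (Q1 Q) B then x u * bracketb Q Z u v w else 0)" .
  qed
  then show ?thesis by simp
qed

lemma L0_le:
  fixes y :: "_ \<Rightarrow> 'k::field"
  assumes y: "y \<in> L0rep Q Z" and nz: "y (apath Q b, apath Q e) \<noteq> 0" and ne: "b \<noteq> e"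
  shows "arrow_le Q Z e b"
proof -
  have ks: "y \<in> kspace Q (Q1 Q) (Q1 Q)" and ker: "psi1 Q Z y = (\<lambda>_. 0)"
    using y by (auto simp: L0rep_def KerPsi1_def)
  have inpar: "(apath Q b, apath Q e) \<in> par Q (Q1 Q) (Q1 Q)"
    using ks nz kspace_out by blast
  then have be: "b \<in> arrs Q" "e \<in> arrs Q" "parallel Q (apath Q b) (apath Q e)"
    by (auto simp: par_def Q1_def)
  have "repl_count Q Z p b (apath Q e) q = 0" if p: "p \<in> Z" for p q
  proof (rule ccontr)
    assume rnz: "repl_count Q Z p b (apath Q e) q \<noteq> 0"
    from rc_nz[OF this] obtain i where i: "i < length (snd p)" "snd p ! i = b"
      and q: "q = (fst p, (snd p)[i := e])" and qB: "q \<in> B"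
      by (auto simp: upd_conv_take_nth_drop)
    have rc1: "repl_count Q Z p b (apath Q e) q = 1"
    proof -
      have "{j. j < length (snd p) \<and> snd p ! j = b \<and>
          q = (fst p, take j (snd p) @ snd (apath Q e) @ drop (Suc j) (snd p)) \<and> q \<in> B} = {i}"
      proof (rule set_eqI, rule iffI)
        fix j assume "j \<in> {j. j < length (snd p) \<and> snd p ! j = b \<and>
          q = (fst p, take j (snd p) @ snd (apath Q e) @ drop (Suc j) (snd p)) \<and> q \<in> B}"
        then have j: "j < length (snd p)" "(snd p)[j := e] = (snd p)[i := e]"
          using q by (auto simp: upd_conv_take_nth_drop)
        show "j \<in> {i}"
        proof (rule ccontr)
          assume "j \<notin> {i}"
          then have "(snd p)[j := e] ! i = b" using i by simp
          moreover have "(snd p)[i := e] ! i = e" using i by simp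
          ultimately show False using j ne by simp
        qed
      next
        fix j assume "j \<in> {i}"
        then show "j \<in> {j. j < length (snd p) \<and> snd p ! j = b \<and>
          q = (fst p, take j (snd p) @ snd (apath Q e) @ drop (Suc j) (snd p)) \<and> q \<in> B}"
          using i q qB by (simp add: upd_conv_take_nth_drop)
      qed
      then show ?thesis unfolding repl_count_def by simp
    qed
    have term0: "y u * psi1b Q Z (fst u) (snd u) (p, q) = 0"
      if u: "u \<in> par Q (Q1 Q) B" "u \<noteq> (apath Q b, apath Q e)" for u
    proof (cases "y u = 0")
      case False
      then have "u \<in> par Q (Q1 Q) (Q1 Q)" using ks kspace_out by blast
      then obtain b' e' where u': "u = (apath Q b', apath Q e')" "b' \<in> arrs Q" "e' \<in> arrs Q"
        by (auto simp: par_def Q1_def)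
      show ?thesis
      proof (rule ccontr)
        assume "y u * psi1b Q Z (fst u) (snd u) (p, q) \<noteq> 0"
        then have "psi1b Q Z (apath Q b') (apath Q e') (p, q) \<noteq> (0::'k)" using u' by simp
        then have "repl_count Q Z p b' (apath Q e') q \<noteq> 0"
          unfolding psi1b_def by (metis of_nat_0 fst_conv snd_conv hd_apath)
        from rc_nz[OF this] obtain j where j: "j < length (snd p)" "snd p ! j = b'"
          and q': "q = (fst p, (snd p)[j := e'])"
          by (auto simp: upd_conv_take_nth_drop)
        have eqs: "(snd p)[j := e'] = (snd p)[i := e]" using q q' by simp
        show False
        proof (cases "j = i")
          case True
          then have "e' = e" using eqs i j by (metis nth_list_update_eq)
          then show False using True u' i j u(2) by simp
        next
          case False
          then have "(snd p)[j := e'] ! i = b" using i by simp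
          moreover have "(snd p)[i := e] ! i = e" using i by simp
          ultimately show False using eqs ne by simp
        qed
      qed
    qed simp
    have upar: "(apath Q b, apath Q e) \<in> par Q (Q1 Q) B"
      using inpar be apath_B by (auto simp: par_def)
    have "psi1 Q Z y (p, q) = (\<Sum>u\<in>par Q (Q1 Q) B. y u * psi1b Q Z (fst u) (snd u) (p, q))"
      by (simp add: psi1_def)
    also have "\<dots> = y (apath Q b, apath Q e) * psi1b Q Z (apath Q b) (apath Q e) (p, q)"
    proof -
      have "(\<Sum>u\<in>par Q (Q1 Q) B - {(apath Q b, apath Q e)}. y u * psi1b Q Z (fst u) (snd u) (p, q)) = 0"
        by (rule sum.neutral) (use term0 in blast)
      then show ?thesis using upar fin_par1B by (subst sum.remove[of _ "(apath Q b, apath Q e)"]) auto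
    qed
    also have "\<dots> = y (apath Q b, apath Q e)" using rc1 p by (simp add: psi1b_def)
    finally show False using ker nz by (metis)
  qed
  then show ?thesis using be by (auto simp: arrow_le_def parallel_def)
qed

end



context qset begin

lemma parQ1_cases:
  assumes "u \<in> par Q (Q1 Q) B"
  obtains a gam where "u = (apath Q a, gam)" "a \<in> arrs Q" "gam \<in> B" "fst gam = src Q a" "ptgt Q gam = tgt Q a"
  using assms unfolding mem_parQ1 by (metis prod.collapse)

lemma bb_diag:
  assumes "b' \<in> arrs Q" "e' \<in> arrs Q" "src Q b' = src Q e'"
  shows "bracketb Q Z (apath Q a, apath Q a) (apath Q b', apath Q e') w =
    (if w = (apath Q b', apath Q e') then (if e' = a then 1 else 0) - (if a = b' then 1 else 0) else (0::'k::field))"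
proof -
  have B1: "apath Q e' \<in> B" using assms apath_B by blast
  have f: "(if fst w = apath Q b' then of_nat (repl_count Q Z (apath Q e') a (apath Q a) (snd w)) else 0)
     = (if w = (apath Q b', apath Q e') \<and> e' = a then 1 else (0::'k))"
    using B1 unfolding rc_single by (cases w) (auto simp: apath_def)
  have s: "(if fst w = apath Q a then of_nat (repl_count Q Z (apath Q a) b' (apath Q e') (snd w)) else 0)
     = (if w = (apath Q b', apath Q e') \<and> a = b' then 1 else (0::'k))"
    using B1 assms unfolding rc_single by (cases w) (auto simp: apath_def)
  show ?thesis by (simp only: bracketb_def fst_conv snd_conv hd_apath f s) simp
qed

lemma bracket_diag_zero:
  fixes x y :: "_ \<Rightarrow> 'k::field"
  assumes xd: "\<And>u. x u \<noteq> 0 \<Longrightarrow> \<exists>a\<in>arrs Q. u = (apath Q a, apath Q a)"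
    and y: "y \<in> kspace Q (Q1 Q) (Q1 Q)"
    and h: "\<And>b e. y (apath Q b, apath Q e) \<noteq> 0 \<Longrightarrow> b \<noteq> e \<Longrightarrow>
              x (apath Q e, apath Q e) = x (apath Q b, apath Q b)"
  shows "bracket Q Z x y = (\<lambda>_. 0)"
proof
  fix w
  have inner: "(\<Sum>u\<in>par Q (Q1 Q) B. x u * y v * bracketb Q Z u v w) = 0" for v
  proof (cases "y v = 0")
    case False
    then have "v \<in> par Q (Q1 Q) (Q1 Q)" using y kspace_out by blast
    then obtain b' e' where v: "v = (apath Q b', apath Q e')" "b' \<in> arrs Q" "e' \<in> arrs Q"
      "src Q b' = src Q e'" "tgt Q b' = tgt Q e'"
      by (auto simp: par_def Q1_def parallel_def)
    have t: "x u * y v * bracketb Q Z u v w =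
       y v * (if w = v then pt (apath Q e', apath Q e') u * x u - pt (apath Q b', apath Q b') u * x u else 0)" for u
    proof (cases "x u = 0")
      case False
      then obtain a where a: "u = (apath Q a, apath Q a)" "a \<in> arrs Q" using xd by blast
      show ?thesis unfolding a(1) v(1) bb_diag[OF v(2-4)] by (auto simp: pt_def algebra_simps)
    qed simp
    have "(\<Sum>u\<in>par Q (Q1 Q) B. x u * y v * bracketb Q Z u v w) =
       y v * (if w = v then (\<Sum>u\<in>par Q (Q1 Q) B. pt (apath Q e', apath Q e') u * x u)
                          - (\<Sum>u\<in>par Q (Q1 Q) B. pt (apath Q b', apath Q b') u * x u) else 0)"
      unfolding t by (simp add: sum_distrib_left right_diff_distrib sum_subtractf)
    also have "\<dots> = y v * (if w = v then x (apath Q e', apath Q e') - x (apath Q b', apath Q b') else 0)"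
      using v fin_par1B apath_B by (simp add: sum_pt par_def Q1_def parallel_def)
    also have "\<dots> = 0"
      using h[of b' e'] False v(1) by (cases "b' = e'") auto
    finally show ?thesis .
  qed simp
  have "bracket Q Z x y w = (\<Sum>v\<in>par Q (Q1 Q) B. \<Sum>u\<in>par Q (Q1 Q) B. x u * y v * bracketb Q Z u v w)"
    unfolding bracket_def by (rule sum.swap)
  also have "\<dots> = 0" using inner by simp
  finally show "bracket Q Z x y w = 0" .
qed

lemma bb_ww:
  assumes "b \<in> arrs Q" "e \<in> arrs Q" "src Q b = src Q e" and u: "u \<in> par Q (Q1 Q) B"
  shows "bracketb Q Z u (apath Q b, apath Q e) (apath Q b, apath Q e) =
     pt (apath Q e, apath Q e) u - (pt (apath Q b, apath Q b) u :: 'k::field)"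
proof -
  obtain a gam where g: "u = (apath Q a, gam)" "a \<in> arrs Q" "gam \<in> B" "fst gam = src Q a"
    using u by (rule parQ1_cases)
  have eB: "apath Q e \<in> B" using assms apath_B by blast
  have f: "repl_count Q Z (apath Q e) a gam (apath Q e) = (if u = (apath Q e, apath Q e) then 1 else 0)"
    unfolding rc_single using g eB by (cases gam) (auto simp: apath_def)
  have s: "(if apath Q b = apath Q a then repl_count Q Z gam b (apath Q e) (apath Q e) else 0)
      = (if u = (apath Q b, apath Q b) then 1 else 0)"
  proof (cases "a = b")
    case True
    show ?thesis
    proof (cases "gam = apath Q b")
      case True
      have "repl_count Q Z (apath Q b) b (apath Q e) (apath Q e) = 1"
        using eB assms by (simp only: rc_single) (simp add: apath_def)
      then show ?thesis using g \<open>a = b\<close> True by auto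
    next
      case False
      have "repl_count Q Z gam b (apath Q e) (apath Q e) = 0"
      proof (rule ccontr)
        assume "repl_count Q Z gam b (apath Q e) (apath Q e) \<noteq> 0"
        from rc_nz[OF this] obtain i where i: "i < length (snd gam)" "snd gam ! i = b"
          "[e] = take i (snd gam) @ [e] @ drop (Suc i) (snd gam)" by (auto simp: apath_def)
        then have "length (take i (snd gam)) + length (drop (Suc i) (snd gam)) = 0"
          by (metis One_nat_def add_is_0 append_Cons append_Nil length_Cons length_append list.size(3) add_Suc_right nat.inject)
        then have tk: "take i (snd gam) = []" "drop (Suc i) (snd gam) = []" using i(1) by simp_all
        have "snd gam = take i (snd gam) @ snd gam ! i # drop (Suc i) (snd gam)"
          using i(1) by (rule id_take_nth_drop)
        then have "snd gam = [b]" using tk i(2) by simp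
        then have "gam = apath Q b" using g True by (cases gam) (simp add: apath_def)
        then show False using False by simp
      qed
      then show ?thesis using False g by auto
    qed
  next
    case False
    then show ?thesis using g by auto
  qed
  have s': "(if apath Q b = apath Q a then (of_nat (repl_count Q Z gam b (apath Q e) (apath Q e)) :: 'k) else 0)
      = (if u = (apath Q b, apath Q b) then 1 else 0)"
    by (cases "apath Q b = apath Q a") (use s in auto)
  have f': "(of_nat (repl_count Q Z (apath Q e) a gam (apath Q e)) :: 'k) = (if u = (apath Q e, apath Q e) then 1 else 0)"
    using f by simp
  have "bracketb Q Z u (apath Q b, apath Q e) (apath Q b, apath Q e) =
    (of_nat (repl_count Q Z (apath Q e) a gam (apath Q e)) :: 'k)
     - (if apath Q b = apath Q a then of_nat (repl_count Q Z gam b (apath Q e) (apath Q e)) else 0)"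
    by (simp only: bracketb_def g(1) fst_conv snd_conv hd_apath if_True simp_thms(6))
  also have "\<dots> = pt (apath Q e, apath Q e) u - pt (apath Q b, apath Q b) u"
    unfolding s' f' pt_def by simp
  finally show ?thesis .
qed

lemma bracket_pt_be:
  fixes x :: "_ \<Rightarrow> 'k::field"
  assumes "b \<in> arrs Q" "e \<in> arrs Q" "src Q b = src Q e" "tgt Q b = tgt Q e"
  shows "bracket Q Z x (pt (apath Q b, apath Q e)) (apath Q b, apath Q e) =
     x (apath Q e, apath Q e) - x (apath Q b, apath Q b)"
proof -
  have inp: "(apath Q c, apath Q d) \<in> par Q (Q1 Q) B" if "c \<in> arrs Q" "d \<in> arrs Q" "src Q c = src Q d" "tgt Q c = tgt Q d" for c d
    using that apath_B by (auto simp: par_def Q1_def parallel_def)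
  have "bracket Q Z x (pt (apath Q b, apath Q e)) (apath Q b, apath Q e) =
     (\<Sum>u\<in>par Q (Q1 Q) B. x u * bracketb Q Z u (apath Q b, apath Q e) (apath Q b, apath Q e))"
    using inp[OF assms] by (simp add: bracket_pt)
  also have "\<dots> = (\<Sum>u\<in>par Q (Q1 Q) B. pt (apath Q e, apath Q e) u * x u - pt (apath Q b, apath Q b) u * x u)"
    by (rule sum.cong[OF refl]) (simp add: bb_ww[OF assms(1-3)] algebra_simps)
  also have "\<dots> = x (apath Q e, apath Q e) - x (apath Q b, apath Q b)"
    using inp[of e e] inp[of b b] assms fin_par1B by (simp add: sum_subtractf sum_pt)
  finally show ?thesis .
qed

lemma bracket_cc:
  fixes x :: "_ \<Rightarrow> 'k::field"
  assumes x: "x \<in> kspace Q (Q1 Q) B" and c: "c \<in> arrs Q"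
  shows "bracket Q Z x (pt (apath Q c, apath Q c)) w =
    (of_nat (count_list (snd (fst w)) c) - of_nat (count_list (snd (snd w)) c)) * x w"
proof -
  have inp: "(apath Q c, apath Q c) \<in> par Q (Q1 Q) B"
    using c apath_B by (auto simp: par_def Q1_def parallel_def)
  define K :: 'k where "K = of_nat (count_list (snd (fst w)) c) - of_nat (count_list (snd (snd w)) c)"
  have t: "x u * bracketb Q Z u (apath Q c, apath Q c) w = pt w u * (x u * K)"
    if u: "u \<in> par Q (Q1 Q) B" for u
  proof -
    obtain a gam where g: "u = (apath Q a, gam)" "a \<in> arrs Q" "gam \<in> B" "fst gam = src Q a"
      using u by (rule parQ1_cases)
    have f: "(if fst w = apath Q c then of_nat (repl_count Q Z (apath Q c) a gam (snd w)) else 0)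
       = (if u = w then of_nat (count_list (snd (fst w)) c) else (0::'k))"
    proof (cases "u = w")
      case True
      then have w: "fst w = apath Q a" "snd w = gam" using g by auto
      have gg: "gam = (src Q a, snd gam)" using g by (metis prod.collapse)
      show ?thesis unfolding rc_single using True w g gg by (cases "a = c") auto
    next
      case False
      have "\<not> (fst w = apath Q c \<and> c = a \<and> snd w = (src Q c, snd gam))"
      proof
        assume "fst w = apath Q c \<and> c = a \<and> snd w = (src Q c, snd gam)"
        then have "w = u" using g by (metis prod.collapse)
        then show False using False by simp
      qed
      then show ?thesis unfolding rc_single using False by auto
    qed
    have s: "(if fst w = apath Q a then of_nat (repl_count Q Z gam c (apath Q c) (snd w)) else 0)
       = (if u = w then of_nat (count_list (snd (snd w)) c) else (0::'k))"
      unfolding rc_self using g by (cases w) auto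
    have "bracketb Q Z u (apath Q c, apath Q c) w = (if u = w then K else 0)"
      by (simp only: bracketb_def fst_conv snd_conv g(1) hd_apath)
         (use f s g(1) in \<open>simp add: K_def\<close>)
    then show ?thesis by (simp add: pt_def)
  qed
  have "bracket Q Z x (pt (apath Q c, apath Q c)) w =
     (\<Sum>u\<in>par Q (Q1 Q) B. x u * bracketb Q Z u (apath Q c, apath Q c) w)"
    using inp by (simp add: bracket_pt)
  also have "\<dots> = (\<Sum>u\<in>par Q (Q1 Q) B. pt w u * (x u * K))"
    by (rule sum.cong[OF refl]) (rule t)
  also have "\<dots> = x w * K"
    using fin_par1B kspace_out[OF x, of w] by (simp add: sum_pt)
  finally show ?thesis by (simp add: K_def)
qed

end



context qset begin

definition deg :: "('v, 'a) path \<times> ('v, 'a) path \<Rightarrow> 'a \<Rightarrow> int" where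
  "deg w = (\<lambda>c. int (count_list (snd (snd w)) c) - int (count_list (snd (fst w)) c))"

definition Pd :: "('a \<Rightarrow> int) \<Rightarrow> (('v, 'a) path \<times> ('v, 'a) path \<Rightarrow> 'k::field)
   \<Rightarrow> ('v, 'a) path \<times> ('v, 'a) path \<Rightarrow> 'k" where
  "Pd d g = (\<lambda>w. if deg w = d then g w else 0)"

lemma imgI: "f \<in> kspace Q (Q0 Q) B \<Longrightarrow> psi0 Q Z f = g \<Longrightarrow> g \<in> ImPsi0 Q Z"
  unfolding ImPsi0_def by blast

lemma psi0b_deg:
  assumes "psi0b Q Z e gam w \<noteq> (0::'k::field)"
  shows "deg w = (\<lambda>c. int (count_list (snd gam) c))"
proof -
  have "(\<Sum>a\<in>{a\<in>arrs Q. src Q a = fst e \<and> (fst gam, a # snd gam) \<in> B}.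
         delta (apath Q a, (fst gam, a # snd gam)) w) \<noteq> (0::'k) \<or>
        (\<Sum>a\<in>{a\<in>arrs Q. tgt Q a = fst e \<and> (src Q a, snd gam @ [a]) \<in> B}.
         delta (apath Q a, (src Q a, snd gam @ [a])) w) \<noteq> (0::'k)"
    using assms unfolding psi0b_def by auto
  then show ?thesis
  proof
    assume "(\<Sum>a\<in>{a\<in>arrs Q. src Q a = fst e \<and> (fst gam, a # snd gam) \<in> B}.
         delta (apath Q a, (fst gam, a # snd gam)) w) \<noteq> (0::'k)"
    then obtain a where "delta (apath Q a, (fst gam, a # snd gam)) w \<noteq> (0::'k)"
      using sum.not_neutral_contains_not_neutral by blast
    then have "w = (apath Q a, (fst gam, a # snd gam))" by (auto simp: delta_def split: if_splits)
    then show ?thesis by (auto simp: deg_def)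
  next
    assume "(\<Sum>a\<in>{a\<in>arrs Q. tgt Q a = fst e \<and> (src Q a, snd gam @ [a]) \<in> B}.
         delta (apath Q a, (src Q a, snd gam @ [a])) w) \<noteq> (0::'k)"
    then obtain a where "delta (apath Q a, (src Q a, snd gam @ [a])) w \<noteq> (0::'k)"
      using sum.not_neutral_contains_not_neutral by blast
    then have "w = (apath Q a, (src Q a, snd gam @ [a]))" by (auto simp: delta_def split: if_splits)
    then show ?thesis by (auto simp: deg_def)
  qed
qed

lemma ImPsi0_Pd:
  fixes g :: "_ \<Rightarrow> 'k::field"
  assumes "g \<in> ImPsi0 Q Z"
  shows "Pd d g \<in> ImPsi0 Q Z"
proof -
  obtain f where f: "f \<in> kspace Q (Q0 Q) B" "g = psi0 Q Z f" using assms by (auto simp: ImPsi0_def)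
  define f' where "f' = (\<lambda>u. if (\<lambda>c. int (count_list (snd (snd u)) c)) = d then f u else 0)"
  have f'k: "f' \<in> kspace Q (Q0 Q) B" using f(1) by (auto simp: kspace_def f'_def)
  have "psi0 Q Z f' = Pd d g"
  proof
    fix w
    show "psi0 Q Z f' w = Pd d g w"
    proof (cases "deg w = d")
      case True
      have eq: "f' u * psi0b Q Z (fst u) (snd u) w = f u * psi0b Q Z (fst u) (snd u) w" for u
        using psi0b_deg[where 'k='k, of "fst u" "snd u" w] True by (auto simp: f'_def)
      have "psi0 Q Z f' w = psi0 Q Z f w" unfolding psi0_def by (rule sum.cong[OF refl]) (rule eq)
      then show ?thesis using True unfolding Pd_def f(2) by simp
    next
      case False
      have eq: "f' u * psi0b Q Z (fst u) (snd u) w = 0" for u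
        using psi0b_deg[where 'k='k, of "fst u" "snd u" w] False by (auto simp: f'_def)
      have "psi0 Q Z f' w = 0" unfolding psi0_def by (rule sum.neutral) (simp add: eq)
      then show ?thesis using False by (simp add: Pd_def)
    qed
  qed
  then show ?thesis using f'k imgI by blast
qed

lemma ImPsi0_scale:
  fixes g :: "_ \<Rightarrow> 'k::field"
  assumes "g \<in> ImPsi0 Q Z"
  shows "(\<lambda>w. r * g w) \<in> ImPsi0 Q Z"
proof -
  obtain f where f: "f \<in> kspace Q (Q0 Q) B" "g = psi0 Q Z f" using assms by (auto simp: ImPsi0_def)
  have "(\<lambda>u. r * f u) \<in> kspace Q (Q0 Q) B" using f(1) by (auto simp: kspace_def)
  moreover have "psi0 Q Z (\<lambda>u. r * f u) = (\<lambda>w. r * g w)"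
    by (auto simp: psi0_def f(2) sum_distrib_left mult.assoc)
  ultimately show ?thesis by (rule imgI)
qed

lemma ImPsi0_zero: "(\<lambda>_. 0::'k::field) \<in> ImPsi0 Q Z"
proof -
  have "(\<lambda>_. 0::'k) \<in> kspace Q (Q0 Q) B" by (auto simp: kspace_def)
  moreover have "psi0 Q Z (\<lambda>_. 0::'k) = (\<lambda>_. 0)" by (auto simp: psi0_def)
  ultimately show ?thesis by (rule imgI)
qed

lemma ImPsi0_add:
  fixes g1 g2 :: "_ \<Rightarrow> 'k::field"
  assumes "g1 \<in> ImPsi0 Q Z" "g2 \<in> ImPsi0 Q Z"
  shows "(\<lambda>w. g1 w + g2 w) \<in> ImPsi0 Q Z"
proof -
  obtain f1 where f1: "f1 \<in> kspace Q (Q0 Q) B" "g1 = psi0 Q Z f1" using assms by (auto simp: ImPsi0_def)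
  obtain f2 where f2: "f2 \<in> kspace Q (Q0 Q) B" "g2 = psi0 Q Z f2" using assms by (auto simp: ImPsi0_def)
  have "(\<lambda>u. f1 u + f2 u) \<in> kspace Q (Q0 Q) B" using f1(1) f2(1) by (auto simp: kspace_def)
  moreover have "psi0 Q Z (\<lambda>u. f1 u + f2 u) = (\<lambda>w. g1 w + g2 w)"
    by (auto simp: psi0_def f1(2) f2(2) sum.distrib distrib_right)
  ultimately show ?thesis by (rule imgI)
qed

lemma ImPsi0_sum:
  fixes G :: "_ \<Rightarrow> _ \<Rightarrow> 'k::field"
  assumes "finite D" "\<And>d. d \<in> D \<Longrightarrow> G d \<in> ImPsi0 Q Z"
  shows "(\<lambda>w. \<Sum>d\<in>D. G d w) \<in> ImPsi0 Q Z"
  using assms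
proof (induction D rule: finite_induct)
  case empty
  then show ?case using ImPsi0_zero by simp
next
  case (insert d D)
  then show ?case using ImPsi0_add[of "G d" "\<lambda>w. \<Sum>d\<in>D. G d w"] by simp
qed

end



context qset begin

lemma B_is_path: "p \<in> B \<Longrightarrow> is_path Q p" by (simp add: Bset_def)

lemma no_cycle_notin:
  assumes nc: "\<not> has_oriented_cycle Q" and eB: "eps \<in> B" and b: "b \<in> arrs Q"
    and s: "fst eps = src Q b" and t: "ptgt Q eps = tgt Q b" and ne: "eps \<noteq> apath Q b"
  shows "b \<notin> set (snd eps)"
proof
  assume "b \<in> set (snd eps)"
  then obtain xs ys where L: "snd eps = xs @ b # ys" by (meson split_list)
  have P: "is_path Q eps" using eB B_is_path by blast
  then have P0: "fst eps \<in> verts Q" "set (snd eps) \<subseteq> arrs Q" "fst eps = src Q (last (snd eps))"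
    and P1: "\<And>i. Suc i < length (snd eps) \<Longrightarrow> src Q (snd eps ! i) = tgt Q (snd eps ! Suc i)"
    using L by (auto simp: is_path_def)
  show False
  proof (cases "ys = []")
    case False
    define p where "p = (fst eps, ys)"
    have "is_path Q p"
      unfolding is_path_def p_def
    proof (intro conjI allI impI)
      show "fst (fst eps, ys) \<in> verts Q" using P0 by simp
      show "set (snd (fst eps, ys)) \<subseteq> arrs Q" using P0 L by auto
      show "fst (fst eps, ys) = src Q (last (snd (fst eps, ys)))" using P0(3) L False by simp
      fix i assume "Suc i < length (snd (fst eps, ys))"
      then have "Suc (length xs + 1 + i) < length (snd eps)" using L by simp
      from P1[OF this] show "src Q (snd (fst eps, ys) ! i) = tgt Q (snd (fst eps, ys) ! Suc i)"
        using L by (simp add: nth_append)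
    qed
    moreover have "psrc p = ptgt Q p"
    proof -
      have "Suc (length xs) < length (snd eps)" using L False by simp
      from P1[OF this] have "src Q b = tgt Q (hd ys)" using L False by (simp add: nth_append hd_conv_nth)
      then show ?thesis using s False by (simp add: p_def psrc_def ptgt_def)
    qed
    ultimately have "has_oriented_cycle Q" unfolding has_oriented_cycle_def
      using False by (intro exI[of _ p]) (simp add: p_def)
    then show False using nc by simp
  next
    case True
    then have xne: "xs \<noteq> []" using L s ne by (cases eps) (auto simp: apath_def)
    define p where "p = (tgt Q b, xs)"
    have "is_path Q p"
      unfolding is_path_def p_def
    proof (intro conjI allI impI)
      show "fst (tgt Q b, xs) \<in> verts Q" using fq b by (auto simp: finite_quiver_def)
      show "set (snd (tgt Q b, xs)) \<subseteq> arrs Q" using P0 L by auto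
      show "fst (tgt Q b, xs) = src Q (last (snd (tgt Q b, xs)))"
      proof -
        have "Suc (length xs - 1) < length (snd eps)" using L xne by simp
        from P1[OF this] have "src Q (xs ! (length xs - 1)) = tgt Q b"
          using L xne by (simp add: nth_append)
        then show ?thesis using xne by (simp add: last_conv_nth)
      qed
      fix i assume "Suc i < length (snd (tgt Q b, xs))"
      then have "Suc i < length (snd eps)" "Suc i < length xs" using L by simp_all
      from P1[OF this(1)] show "src Q (snd (tgt Q b, xs) ! i) = tgt Q (snd (tgt Q b, xs) ! Suc i)"
        using L \<open>Suc i < length xs\<close> by (simp add: nth_append)
    qed
    moreover have "psrc p = ptgt Q p"
    proof -
      have "ptgt Q eps = tgt Q (hd xs)" using L xne by (simp add: ptgt_def)
      then show ?thesis using t xne by (simp add: p_def psrc_def ptgt_def)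
    qed
    ultimately have "has_oriented_cycle Q" unfolding has_oriented_cycle_def
      using xne by (intro exI[of _ p]) (simp add: p_def)
    then show False using nc by simp
  qed
qed

lemma deg_nondiag:
  assumes hyp: "CHAR('k::field) = 0 \<or> \<not> has_oriented_cycle Q"
    and w: "w \<in> par Q (Q1 Q) B" and nd: "\<not> (\<exists>a. w = (apath Q a, apath Q a))"
  shows "\<exists>c\<in>arrs Q. of_int (deg w c) \<noteq> (0::'k)"
proof -
  obtain b eps where g: "w = (apath Q b, eps)" "b \<in> arrs Q" "eps \<in> B" "fst eps = src Q b" "ptgt Q eps = tgt Q b"
    using w by (rule parQ1_cases)
  have ne: "eps \<noteq> apath Q b" using nd g(1) by blast
  have dg: "deg w c = int (count_list (snd eps) c) - (if b = c then 1 else 0)" for c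
    using g(1) by (simp add: deg_def)
  from hyp show ?thesis
  proof
    assume nc: "\<not> has_oriented_cycle Q"
    have "b \<notin> set (snd eps)" using no_cycle_notin[OF nc g(3,2,4,5) ne] .
    then have "deg w b = -1" using dg by simp
    then show ?thesis using g(2) by force
  next
    assume c0: "CHAR('k) = 0"
    have oi: "of_int n = (0::'k) \<longleftrightarrow> n = 0" for n
      using of_int_eq_0_iff_char_dvd[where 'a='k, of n] c0 by simp
    show ?thesis
    proof (cases "count_list (snd eps) b = 1")
      case False
      then have "deg w b \<noteq> 0" using dg by simp
      then show ?thesis using g(2) oi by blast
    next
      case True
      have "\<exists>c\<in>set (snd eps). c \<noteq> b"
      proof (rule ccontr)
        assume "\<not> (\<exists>c\<in>set (snd eps). c \<noteq> b)"
        then have "set (snd eps) \<subseteq> {b}" by auto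
        from sum_count_set[OF this] have "length (snd eps) = 1" using True by simp
        then obtain x where x: "snd eps = [x]" by (cases "snd eps") auto
        then have "snd eps = [b]" using \<open>set (snd eps) \<subseteq> {b}\<close> by simp
        then have "eps = apath Q b" using g(4) by (cases eps) (simp add: apath_def)
        then show False using ne by simp
      qed
      then obtain c where c: "c \<in> set (snd eps)" "c \<noteq> b" by blast
      then have "count_list (snd eps) c \<noteq> 0" by (simp add: count_list_0_iff)
      then have "deg w c \<noteq> 0" using dg c(2) by simp
      moreover have "c \<in> arrs Q" using c(1) B_is_path[OF g(3)] by (auto simp: is_path_def)
      ultimately show ?thesis using oi by blast
    qed
  qed
qed

end



context qset begin

definition RR :: "('a \<times> 'a) set" where
  "RR = {(x, y). arrow_le Q Z x y \<or> arrow_le Q Z y x}"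

definition RC :: "'a set \<Rightarrow> ('a \<times> 'a) set" where
  "RC C = {(x, y). x \<in> C \<and> y \<in> C \<and> (arrow_le Q Z x y \<or> arrow_le Q Z y x)}"

definition comp :: "'a \<Rightarrow> 'a set" where
  "comp a = {b. (a, b) \<in> RR\<^sup>*}"

lemma conn_RC: "connected_arrows Q Z C \<longleftrightarrow> (\<forall>a\<in>C. \<forall>b\<in>C. (a, b) \<in> (RC C)\<^sup>*)"
  by (simp add: connected_arrows_def RC_def)

lemma RC_RR: "RC C \<subseteq> RR" by (auto simp: RC_def RR_def)

lemma RC_mono: "C \<subseteq> D \<Longrightarrow> RC C \<subseteq> RC D" by (auto simp: RC_def)

lemma le_par: "arrow_le Q Z x y \<Longrightarrow> x \<in> arrs Q \<and> y \<in> arrs Q \<and> src Q x = src Q y \<and> tgt Q x = tgt Q y"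
  by (auto simp: arrow_le_def parallel_def)

lemma comp_closed:
  assumes C: "C \<in> arrow_components Q Z" and b: "b \<in> C" and le: "arrow_le Q Z e b \<or> arrow_le Q Z b e"
  shows "e \<in> C"
proof -
  obtain a0 where a0: "C \<subseteq> arrow_class Q a0" "connected_arrows Q Z C"
    "\<And>D. C \<subseteq> D \<Longrightarrow> D \<subseteq> arrow_class Q a0 \<Longrightarrow> connected_arrows Q Z D \<Longrightarrow> D = C"
  proof -
    have "\<exists>a0\<in>arrs Q. C \<subseteq> arrow_class Q a0 \<and> C \<noteq> {} \<and> connected_arrows Q Z C \<and>
      (\<forall>D. C \<subseteq> D \<and> D \<subseteq> arrow_class Q a0 \<and> connected_arrows Q Z D \<longrightarrow> D = C)"
      using C unfolding arrow_components_def by (rule CollectD)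
    then obtain a0 where "C \<subseteq> arrow_class Q a0 \<and> connected_arrows Q Z C \<and>
      (\<forall>D. C \<subseteq> D \<and> D \<subseteq> arrow_class Q a0 \<and> connected_arrows Q Z D \<longrightarrow> D = C)"
      by (elim bexE conjE) (intro that conjI)
    then show ?thesis using that by (elim conjE) (rule that, assumption, assumption, blast)
  qed
  define D where "D = insert e C"
  have "D \<subseteq> arrow_class Q a0"
  proof -
    have "b \<in> arrow_class Q a0" using a0(1) b by blast
    then have "e \<in> arrow_class Q a0" using le le_par[of e b] le_par[of b e]
      by (auto simp: arrow_class_def parallel_def)
    then show ?thesis using a0(1) by (auto simp: D_def)
  qed
  moreover have "connected_arrows Q Z D"
    unfolding conn_RC
  proof (intro ballI)
    fix x y assume x: "x \<in> D" and y: "y \<in> D"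
    have mono: "(RC C)\<^sup>* \<subseteq> (RC D)\<^sup>*" by (rule rtrancl_mono) (rule RC_mono, auto simp: D_def)
    have eb: "(e, b) \<in> RC D" "(b, e) \<in> RC D" using le b by (auto simp: RC_def D_def)
    have cC: "\<And>u v. u \<in> C \<Longrightarrow> v \<in> C \<Longrightarrow> (u, v) \<in> (RC D)\<^sup>*"
      using a0(2) mono unfolding conn_RC by blast
    show "(x, y) \<in> (RC D)\<^sup>*"
    proof (cases "x = e")
      case True
      show ?thesis
      proof (cases "y = e")
        case True then show ?thesis using \<open>x = e\<close> by simp
      next
        case False
        then have "y \<in> C" using y by (auto simp: D_def)
        then show ?thesis using True converse_rtrancl_into_rtrancl[OF eb(1) cC[OF b \<open>y \<in> C\<close>]] by simp
      qed
    next
      case False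
      then have xC: "x \<in> C" using x by (auto simp: D_def)
      show ?thesis
      proof (cases "y = e")
        case True then show ?thesis using rtrancl_into_rtrancl[OF cC[OF xC b] eb(2)] by simp
      next
        case False
        then have "y \<in> C" using y by (auto simp: D_def)
        then show ?thesis using cC xC by blast
      qed
    qed
  qed
  ultimately have "D = C" by (intro a0(3)) (auto simp: D_def)
  then show ?thesis by (auto simp: D_def)
qed

lemma comp_eq:
  assumes C: "C \<in> arrow_components Q Z" and a: "a \<in> C"
  shows "C = comp a"
proof
  show "C \<subseteq> comp a"
  proof
    fix c assume "c \<in> C"
    have "connected_arrows Q Z C" using C unfolding arrow_components_def
      by (elim CollectE bexE conjE)
    then have "(a, c) \<in> (RC C)\<^sup>*" using a \<open>c \<in> C\<close> unfolding conn_RC by blast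
    then show "c \<in> comp a" using rtrancl_mono[OF RC_RR] by (auto simp: comp_def)
  qed
  show "comp a \<subseteq> C"
  proof
    fix c assume "c \<in> comp a"
    then have "(a, c) \<in> RR\<^sup>*" by (simp add: comp_def)
    then show "c \<in> C"
    proof (induction rule: rtrancl_induct)
      case base then show ?case using a .
    next
      case (step y z)
      then show ?case using comp_closed[OF C, of y z] by (auto simp: RR_def)
    qed
  qed
qed

lemma comp_in:
  assumes a: "a \<in> arrs Q"
  shows "comp a \<in> arrow_components Q Z"
proof -
  have sub: "comp a \<subseteq> arrow_class Q a"
  proof
    fix c assume "c \<in> comp a"
    then have "(a, c) \<in> RR\<^sup>*" by (simp add: comp_def)
    then show "c \<in> arrow_class Q a"
    proof (induction rule: rtrancl_induct)
      case base then show ?case using a by (simp add: arrow_class_def parallel_def)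
    next
      case (step y z)
      then show ?case using le_par[of y z] le_par[of z y] by (auto simp: RR_def arrow_class_def parallel_def)
    qed
  qed
  have aa: "a \<in> comp a" by (simp add: comp_def)
  have inC: "(a, c) \<in> (RC (comp a))\<^sup>*" if "(a, c) \<in> RR\<^sup>*" for c
    using that
  proof (induction rule: rtrancl_induct)
    case base then show ?case by simp
  next
    case (step y z)
    then have "y \<in> comp a" "z \<in> comp a" by (auto simp: comp_def intro: rtrancl_into_rtrancl)
    then have "(y, z) \<in> RC (comp a)" using step(2) by (auto simp: RC_def RR_def)
    then show ?case using step(3) by (rule rtrancl_into_rtrancl[rotated])
  qed
  have symm: "(RC (comp a))\<inverse> = RC (comp a)" by (auto simp: RC_def)
  have conn: "connected_arrows Q Z (comp a)"
    unfolding conn_RC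
  proof (intro ballI)
    fix x y assume "x \<in> comp a" "y \<in> comp a"
    then have "(a, x) \<in> (RC (comp a))\<^sup>*" "(a, y) \<in> (RC (comp a))\<^sup>*" using inC by (auto simp: comp_def)
    then have "(x, a) \<in> (RC (comp a))\<^sup>*" "(a, y) \<in> (RC (comp a))\<^sup>*"
      using rtrancl_converseI[of a x "RC (comp a)"] symm by auto
    then show "(x, y) \<in> (RC (comp a))\<^sup>*" by (rule rtrancl_trans)
  qed
  have maxl: "D = comp a" if "comp a \<subseteq> D" "D \<subseteq> arrow_class Q a" "connected_arrows Q Z D" for D
  proof
    show "D \<subseteq> comp a"
    proof
      fix d assume "d \<in> D"
      then have "(a, d) \<in> (RC D)\<^sup>*" using that aa unfolding conn_RC by blast
      then show "d \<in> comp a" using rtrancl_mono[OF RC_RR] by (auto simp: comp_def)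
    qed
  qed (use that in simp)
  show ?thesis unfolding arrow_components_def
  proof (rule CollectI, rule bexI[OF _ a], intro conjI allI impI)
    fix D assume "comp a \<subseteq> D \<and> D \<subseteq> arrow_class Q a \<and> connected_arrows Q Z D"
    then show "D = comp a" using maxl by blast
  qed (use sub aa conn in auto)
qed

lemma comps_unique: "a \<in> arrs Q \<Longrightarrow> {C \<in> arrow_components Q Z. a \<in> C} = {comp a}"
  using comp_in comp_eq by (auto simp: comp_def)

lemma comps_sub: "C \<in> arrow_components Q Z \<Longrightarrow> C \<subseteq> arrs Q"
  by (auto simp: arrow_components_def arrow_class_def)

lemma fin_comps: "finite (arrow_components Q Z)"
proof -
  have "arrow_components Q Z \<subseteq> Pow (arrs Q)" using comps_sub by blast
  moreover have "finite (arrs Q)" using fq by (simp add: finite_quiver_def)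
  ultimately show ?thesis by (meson finite_Pow_iff finite_subset)
qed

lemma comp_le: "arrow_le Q Z e b \<Longrightarrow> comp e = comp b"
proof -
  assume le: "arrow_le Q Z e b"
  have b: "b \<in> arrs Q" using le_par[OF le] by simp
  have "b \<in> comp b" by (simp add: comp_def)
  then have "e \<in> comp b" using comp_closed[OF comp_in[OF b]] le by blast
  then show ?thesis using comp_eq[OF comp_in[OF b]] by simp
qed

end



context qset begin

lemma comp_sum_diag:
  assumes "C \<in> arrow_components Q Z"
  shows "comp_sum Q C (apath Q a0, apath Q a0) = (if a0 \<in> C then 1 else (0::'k::field))"
proof -
  have fC: "finite C" using comps_sub[OF assms] fq finite_subset by (auto simp: finite_quiver_def)
  have "comp_sum Q C (apath Q a0, apath Q a0) = (\<Sum>a\<in>C. if a0 = a then 1 else (0::'k))"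
    unfolding comp_sum_def delta_def by (rule sum.cong) auto
  also have "\<dots> = (if a0 \<in> C then 1 else 0)" using fC by (simp add: sum.delta)
  finally show ?thesis .
qed

lemma comp_sum_off:
  assumes "C \<in> arrow_components Q Z" "\<not> (\<exists>a\<in>arrs Q. w = (apath Q a, apath Q a))"
  shows "comp_sum Q C w = (0::'k::field)"
  unfolding comp_sum_def delta_def using assms comps_sub[OF assms(1)]
  by (intro sum.neutral) auto

lemma combo_diag:
  assumes "a0 \<in> arrs Q"
  shows "(\<Sum>C\<in>arrow_components Q Z. c C * comp_sum Q C (apath Q a0, apath Q a0)) = (c (comp a0) :: 'k::field)"
proof -
  have "(\<Sum>C\<in>arrow_components Q Z. c C * comp_sum Q C (apath Q a0, apath Q a0)) =
      (\<Sum>C\<in>arrow_components Q Z. if a0 \<in> C then c C else 0)"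
    by (rule sum.cong) (auto simp: comp_sum_diag)
  also have "\<dots> = sum c {C \<in> arrow_components Q Z. a0 \<in> C}"
    using fin_comps by (simp add: sum.inter_filter)
  also have "\<dots> = c (comp a0)" using comps_unique[OF assms] by simp
  finally show ?thesis .
qed

lemma combo_off:
  assumes "\<not> (\<exists>a\<in>arrs Q. w = (apath Q a, apath Q a))"
  shows "(\<Sum>C\<in>arrow_components Q Z. c C * comp_sum Q C w) = (0::'k::field)"
  using comp_sum_off[where 'k='k, OF _ assms] by (intro sum.neutral) simp

lemma diag_kspace:
  assumes "\<And>u. x u \<noteq> 0 \<Longrightarrow> \<exists>a\<in>arrs Q. u = (apath Q a, apath Q a)"
  shows "x \<in> kspace Q (Q1 Q) (Q1 Q)" "x \<in> kspace Q (Q1 Q) B"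
  using assms apath_B by (fastforce simp: kspace_def par_def Q1_def parallel_def)+

lemma diag_L0:
  fixes x :: "_ \<Rightarrow> 'k::field"
  assumes "\<And>u. x u \<noteq> 0 \<Longrightarrow> \<exists>a\<in>arrs Q. u = (apath Q a, apath Q a)"
  shows "x \<in> L0rep Q Z"
  using diag_kspace[of x, OF assms] psi1_diag[of x, OF assms] by (simp add: L0rep_def KerPsi1_def)

lemma pt_diag_L0:
  assumes "c \<in> arrs Q"
  shows "(pt (apath Q c, apath Q c) :: _ \<Rightarrow> 'k::field) \<in> L0rep Q Z"
  by (rule diag_L0) (use assms in \<open>auto simp: pt_def split: if_splits\<close>)

lemma pt_le_L0:
  assumes "arrow_le Q Z e b"
  shows "(pt (apath Q b, apath Q e) :: _ \<Rightarrow> 'k::field) \<in> L0rep Q Z"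
proof -
  have p: "b \<in> arrs Q" "e \<in> arrs Q" "src Q b = src Q e" "tgt Q b = tgt Q e" using le_par[OF assms] by auto
  have "(apath Q b, apath Q e) \<in> par Q (Q1 Q) (Q1 Q)" "(apath Q b, apath Q e) \<in> par Q (Q1 Q) B"
    using p apath_B by (auto simp: par_def Q1_def parallel_def)
  then have "(pt (apath Q b, apath Q e) :: _ \<Rightarrow> 'k) \<in> kspace Q (Q1 Q) (Q1 Q)"
     "(pt (apath Q b, apath Q e) :: _ \<Rightarrow> 'k) \<in> kspace Q (Q1 Q) B"
    by (auto intro: pt_kspace1)
  moreover have "psi1 Q Z (pt (apath Q b, apath Q e) :: _ \<Rightarrow> 'k) = (\<lambda>_. 0)" by (rule psi1_pt_le[OF assms])
  ultimately show ?thesis by (simp add: L0rep_def KerPsi1_def)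
qed

lemma Q1_arrs: "apath Q b \<in> Q1 Q \<Longrightarrow> b \<in> arrs Q"
  by (auto simp: Q1_def)

lemma partA:
  fixes x :: "_ \<Rightarrow> 'k::field"
  assumes cx: "central_L0 Q Z x"
  shows "\<exists>c. x - (\<lambda>w. \<Sum>C\<in>arrow_components Q Z. c C * comp_sum Q C w) \<in> ImPsi0 Q Z"
proof -
  have xL: "x \<in> L0rep Q Z" and cen: "\<And>y. y \<in> L0rep Q Z \<Longrightarrow> bracket Q Z x y \<in> ImPsi0 Q Z"
    using cx by (auto simp: central_L0_def)
  have xk: "x \<in> kspace Q (Q1 Q) (Q1 Q)" "x \<in> kspace Q (Q1 Q) B"
    using xL by (auto simp: L0rep_def KerPsi1_def)
  have offd: "x (apath Q b, apath Q e) = 0" if ne: "b \<noteq> e" for b e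
  proof (cases "b \<in> arrs Q")
    case True
    have G: "bracket Q Z x (pt (apath Q b, apath Q b)) \<in> ImPsi0 Q Z"
      using cen pt_diag_L0[OF True] by blast
    have "bracket Q Z x (pt (apath Q b, apath Q b)) (apath Q b, apath Q e) = 0"
      using ImDiag[OF G ne] .
    moreover have "bracket Q Z x (pt (apath Q b, apath Q b)) (apath Q b, apath Q e) = x (apath Q b, apath Q e)"
      using bracket_cc[OF xk(2) True] ne by simp
    ultimately show ?thesis by simp
  next
    case False
    then have "(apath Q b, apath Q e) \<notin> par Q (Q1 Q) (Q1 Q)" using Q1_arrs by (auto simp: par_def)
    then show ?thesis using kspace_out[OF xk(1)] by blast
  qed
  have supp: "\<exists>a\<in>arrs Q. u = (apath Q a, apath Q a)" if "x u \<noteq> 0" for u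
  proof -
    have "u \<in> par Q (Q1 Q) (Q1 Q)" using that kspace_out[OF xk(1)] by blast
    then obtain b e where u: "u = (apath Q b, apath Q e)" "b \<in> arrs Q" by (auto simp: par_def Q1_def)
    then have "b = e" using offd that by blast
    then show ?thesis using u by blast
  qed
  have leq: "x (apath Q e, apath Q e) = x (apath Q b, apath Q b)" if le: "arrow_le Q Z e b" for b e
  proof (cases "b = e")
    case False
    have p: "b \<in> arrs Q" "e \<in> arrs Q" "src Q b = src Q e" "tgt Q b = tgt Q e" using le_par[OF le] by auto
    have G: "bracket Q Z x (pt (apath Q b, apath Q e)) \<in> ImPsi0 Q Z"
      using cen pt_le_L0[OF le] by blast
    have "bracket Q Z x (pt (apath Q b, apath Q e)) (apath Q b, apath Q e) = 0"
      using ImDiag[OF G False] .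
    then show ?thesis using bracket_pt_be[OF p, of x] by simp
  qed simp
  have const: "x (apath Q a', apath Q a') = x (apath Q a, apath Q a)" if "a' \<in> comp a" for a a'
  proof -
    have "(a, a') \<in> RR\<^sup>*" using that by (simp add: comp_def)
    then show ?thesis
    proof (induction rule: rtrancl_induct)
      case (step y z)
      then show ?case using leq[of y z] leq[of z y] by (auto simp: RR_def)
    qed simp
  qed
  define c where "c C = x (apath Q (SOME a. a \<in> C), apath Q (SOME a. a \<in> C))" for C
  have "x = (\<lambda>w. \<Sum>C\<in>arrow_components Q Z. c C * comp_sum Q C w)"
  proof
    fix w
    show "x w = (\<Sum>C\<in>arrow_components Q Z. c C * comp_sum Q C w)"
    proof (cases "\<exists>a\<in>arrs Q. w = (apath Q a, apath Q a)")
      case True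
      then obtain a where a: "a \<in> arrs Q" "w = (apath Q a, apath Q a)" by blast
      have "a \<in> comp a" by (simp add: comp_def)
      then have "(SOME a'. a' \<in> comp a) \<in> comp a" by (rule someI)
      then have "c (comp a) = x w" using const a by (simp add: c_def)
      then show ?thesis using combo_diag[OF a(1), of c] a(2) by simp
    next
      case False
      have "x w = 0" using supp False by blast
      then show ?thesis using combo_off[where 'k='k, OF False, of c] by simp
    qed
  qed
  then have "x - (\<lambda>w. \<Sum>C\<in>arrow_components Q Z. c C * comp_sum Q C w) = (\<lambda>_. 0)"
    by (simp add: fun_diff_def)
  then have "x - (\<lambda>w. \<Sum>C\<in>arrow_components Q Z. c C * comp_sum Q C w) \<in> ImPsi0 Q Z"
    using ImPsi0_zero[where 'k='k] by simp
  then show ?thesis by (rule exI[of _ c])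
qed

lemma partB:
  "central_L0 Q Z (\<lambda>w. \<Sum>C\<in>arrow_components Q Z. c C * comp_sum Q C w :: 'k::field)"
proof -
  define X where "X = (\<lambda>w. \<Sum>C\<in>arrow_components Q Z. c C * comp_sum Q C w :: 'k)"
  have supp: "\<exists>a\<in>arrs Q. u = (apath Q a, apath Q a)" if "X u \<noteq> 0" for u
    using combo_off[of u c] that by (auto simp: X_def)
  have "X \<in> L0rep Q Z" by (rule diag_L0) (use supp in blast)
  moreover have "bracket Q Z X y \<in> ImPsi0 Q Z" if y: "y \<in> L0rep Q Z" for y
  proof -
    have yk: "y \<in> kspace Q (Q1 Q) (Q1 Q)" using y by (simp add: L0rep_def)
    have "bracket Q Z X y = (\<lambda>_. 0)"
    proof (rule bracket_diag_zero[OF _ yk])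
      show "\<exists>a\<in>arrs Q. u = (apath Q a, apath Q a)" if "X u \<noteq> 0" for u using supp that .
      fix b e assume "y (apath Q b, apath Q e) \<noteq> 0" "b \<noteq> e"
      then have le: "arrow_le Q Z e b" using L0_le y by blast
      then have "b \<in> arrs Q" "e \<in> arrs Q" using le_par by auto
      then show "X (apath Q e, apath Q e) = X (apath Q b, apath Q b)"
        using combo_diag[where 'k='k] comp_le[OF le] by (simp add: X_def)
    qed
    then show ?thesis using ImPsi0_zero[where 'k='k] by simp
  qed
  ultimately have "central_L0 Q Z X" unfolding central_L0_def by blast
  then show ?thesis unfolding X_def .
qed

lemma partC:
  fixes x :: "_ \<Rightarrow> 'k::field"
  assumes hyp: "CHAR('k) = 0 \<or> \<not> has_oriented_cycle Q" and cx: "central_H1 Q Z x"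
  shows "\<exists>x'. central_L0 Q Z x' \<and> x - x' \<in> ImPsi0 Q Z"
proof -
  have xK: "x \<in> KerPsi1 Q Z" and cen: "\<And>y. y \<in> KerPsi1 Q Z \<Longrightarrow> bracket Q Z x y \<in> ImPsi0 Q Z"
    using cx by (auto simp: central_H1_def)
  have xk: "x \<in> kspace Q (Q1 Q) B" using xK by (simp add: KerPsi1_def)
  have LK: "\<And>y. y \<in> L0rep Q Z \<Longrightarrow> y \<in> KerPsi1 Q Z" by (simp add: L0rep_def)
  have leq: "x (apath Q e, apath Q e) = x (apath Q b, apath Q b)" if le: "arrow_le Q Z e b" for b e
  proof (cases "b = e")
    case False
    have p: "b \<in> arrs Q" "e \<in> arrs Q" "src Q b = src Q e" "tgt Q b = tgt Q e" using le_par[OF le] by auto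
    have G: "bracket Q Z x (pt (apath Q b, apath Q e)) \<in> ImPsi0 Q Z"
      using cen LK pt_le_L0[OF le] by blast
    have "bracket Q Z x (pt (apath Q b, apath Q e)) (apath Q b, apath Q e) = 0"
      using ImDiag[OF G False] .
    then show ?thesis using bracket_pt_be[OF p, of x] by simp
  qed simp
  define x' where "x' = (\<lambda>w. if \<exists>a\<in>arrs Q. w = (apath Q a, apath Q a) then x w else 0)"
  have supp: "\<exists>a\<in>arrs Q. u = (apath Q a, apath Q a)" if "x' u \<noteq> 0" for u
    using that by (auto simp: x'_def split: if_splits)
  have cL0: "central_L0 Q Z x'"
  proof -
    have "x' \<in> L0rep Q Z" by (rule diag_L0) (use supp in blast)
    moreover have "bracket Q Z x' y \<in> ImPsi0 Q Z" if y: "y \<in> L0rep Q Z" for y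
    proof -
      have yk: "y \<in> kspace Q (Q1 Q) (Q1 Q)" using y by (simp add: L0rep_def)
      have "bracket Q Z x' y = (\<lambda>_. 0)"
      proof (rule bracket_diag_zero[OF _ yk])
        show "\<exists>a\<in>arrs Q. u = (apath Q a, apath Q a)" if "x' u \<noteq> 0" for u using supp that .
        fix b e assume "y (apath Q b, apath Q e) \<noteq> 0" "b \<noteq> e"
        then have le: "arrow_le Q Z e b" using L0_le y by blast
        then have "b \<in> arrs Q" "e \<in> arrs Q" using le_par by auto
        then show "x' (apath Q e, apath Q e) = x' (apath Q b, apath Q b)"
          using leq[OF le] by (auto simp: x'_def)
      qed
      then show ?thesis using ImPsi0_zero[where 'k='k] by simp
    qed
    ultimately show ?thesis unfolding central_L0_def by blast
  qed
  define ND where "ND = {w \<in> par Q (Q1 Q) B. \<not> (\<exists>a. w = (apath Q a, apath Q a))}"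
  define D where "D = deg ` ND"
  have finD: "finite D" using fin_par1B by (simp add: D_def ND_def)
  have Dnz: "\<exists>c\<in>arrs Q. of_int (d c) \<noteq> (0::'k)" if "d \<in> D" for d
    using that deg_nondiag[OF hyp] by (auto simp: D_def ND_def)
  have PdI: "Pd d x \<in> ImPsi0 Q Z" if d: "d \<in> D" for d
  proof -
    obtain c where c: "c \<in> arrs Q" "of_int (d c) \<noteq> (0::'k)" using Dnz[OF d] by blast
    have G: "bracket Q Z x (pt (apath Q c, apath Q c)) \<in> ImPsi0 Q Z"
      using cen LK pt_diag_L0[OF c(1)] by blast
    have eq: "Pd d (bracket Q Z x (pt (apath Q c, apath Q c))) = (\<lambda>w. (- of_int (d c)) * Pd d x w)"
    proof
      fix w
      have "of_nat (count_list (snd (fst w)) c) - of_nat (count_list (snd (snd w)) c) = (- of_int (deg w c) :: 'k)"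
        by (simp add: deg_def)
      then show "Pd d (bracket Q Z x (pt (apath Q c, apath Q c))) w = (- of_int (d c)) * Pd d x w"
        using bracket_cc[OF xk c(1), of w] by (simp add: Pd_def)
    qed
    have "(\<lambda>w. (- 1 / of_int (d c)) * ((- of_int (d c)) * Pd d x w)) \<in> ImPsi0 Q Z"
      using ImPsi0_scale[OF ImPsi0_Pd[OF G, of d], of "- 1 / of_int (d c)"] unfolding eq .
    moreover have "(\<lambda>w. (- 1 / of_int (d c)) * ((- of_int (d c)) * Pd d x w)) = Pd d x"
      using c(2) by (auto simp: field_simps)
    ultimately show ?thesis by simp
  qed
  have diff: "x - x' = (\<lambda>w. \<Sum>d\<in>D. Pd d x w)"
  proof
    fix w
    have S: "(\<Sum>d\<in>D. Pd d x w) = (if deg w \<in> D then x w else 0)"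
      using finD by (simp add: Pd_def sum.delta)
    show "(x - x') w = (\<Sum>d\<in>D. Pd d x w)"
    proof (cases "\<exists>a\<in>arrs Q. w = (apath Q a, apath Q a)")
      case True
      then obtain a where a: "w = (apath Q a, apath Q a)" by blast
      have "deg w = (\<lambda>_. 0)" using a by (simp add: deg_def)
      then have "deg w \<notin> D" using Dnz by force
      then show ?thesis using S True by (simp add: x'_def)
    next
      case False
      then have x'0: "x' w = 0" by (simp add: x'_def)
      show ?thesis
      proof (cases "w \<in> par Q (Q1 Q) B")
        case True
        have "w \<in> ND"
        proof -
          have "\<not> (\<exists>a. w = (apath Q a, apath Q a))"
          proof
            assume "\<exists>a. w = (apath Q a, apath Q a)"
            then obtain a where a: "w = (apath Q a, apath Q a)" by blast
            then have "a \<in> arrs Q" using True Q1_arrs by (auto simp: par_def)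
            then show False using False a by blast
          qed
          then show ?thesis using True by (simp add: ND_def)
        qed
        then have "deg w \<in> D" by (simp add: D_def)
        then show ?thesis using S x'0 by simp
      next
        case False
        then have "x w = 0" using kspace_out[OF xk] by blast
        then show ?thesis using S x'0 by simp
      qed
    qed
  qed
  have "x - x' \<in> ImPsi0 Q Z" unfolding diff by (rule ImPsi0_sum[OF finD PdI])
  then show ?thesis using cL0 by blast
qed

end


theorem lemma3p20:
  fixes Q :: "('v, 'a) quiver" and Z :: "('v, 'a) path set"
  assumes "finite_quiver Q" and "connected_quiver Q"
    and "admissible_Z Q Z" and "finite (Bset Q Z)"
  shows "(\<forall>x::('v, 'a) path \<times> ('v, 'a) path \<Rightarrow> 'k::alg_closed_field.
            central_L0 Q Z x \<longrightarrow>
            (\<exists>c. x - (\<lambda>w. \<Sum>C\<in>arrow_components Q Z. c C * comp_sum Q C w) \<in> ImPsi0 Q Z))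
       \<and> (\<forall>c::'a set \<Rightarrow> 'k. central_L0 Q Z (\<lambda>w. \<Sum>C\<in>arrow_components Q Z. c C * comp_sum Q C w))
       \<and> ((CHAR('k) = 0 \<or> \<not> has_oriented_cycle Q) \<longrightarrow>
            (\<forall>x::('v, 'a) path \<times> ('v, 'a) path \<Rightarrow> 'k. central_H1 Q Z x \<longrightarrow>
               (\<exists>x'. central_L0 Q Z x' \<and> x - x' \<in> ImPsi0 Q Z)))"
proof -
  interpret qset Q Z using assms by (simp add: qset_def)
  have A: "\<forall>x::('v, 'a) path \<times> ('v, 'a) path \<Rightarrow> 'k::alg_closed_field.
            central_L0 Q Z x \<longrightarrow>
            (\<exists>c. x - (\<lambda>w. \<Sum>C\<in>arrow_components Q Z. c C * comp_sum Q C w) \<in> ImPsi0 Q Z)"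
    using partA by blast
  have B: "\<forall>c::'a set \<Rightarrow> 'k. central_L0 Q Z (\<lambda>w. \<Sum>C\<in>arrow_components Q Z. c C * comp_sum Q C w)"
    using partB by blast
  have C: "(CHAR('k) = 0 \<or> \<not> has_oriented_cycle Q) \<longrightarrow>
            (\<forall>x::('v, 'a) path \<times> ('v, 'a) path \<Rightarrow> 'k. central_H1 Q Z x \<longrightarrow>
               (\<exists>x'. central_L0 Q Z x' \<and> x - x' \<in> ImPsi0 Q Z))"
    using partC by blast
  show ?thesis using A B C by blast
qed

end
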